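(* Assume $\mathbf{P}$ is hierarchical, $K$ is a field, and $\tau_{(i)}\neq0$, $\eta_{(i)}\neq-1_K$ for all $i\in\Omega$. Let $D,C\in\mathcal{I}(\overline{\mathbf{P}})$. Then $\pi(\Omega,C)=\pi(\Omega,D)$ if and only if there exists a bijection $\varepsilon:C\to D$ with $\eta_{(i)}=\eta_{(\varepsilon(i))}$ for all $i\in C$.
   Context: $\Omega$ is a finite set and $\mathbf{P}=(\Omega,\preccurlyeq_{\mathbf{P}})$ a poset; $\overline{\mathbf{P}}$ is the dual poset and $\mathcal{I}(\overline{\mathbf{P}})$ its set of ideals (up-closed subsets of $\mathbf{P}$). For $Y\subseteq\Omega$: $\max(Y)$ is the set of maximal elements of $Y$ w.r.t. $\preccurlyeq_{\mathbf{P}}$; $\mathcal{I}(Y)$ is the set of down-closed subsets of $Y$. $\tau,\eta\in K^{\Omega}$. For $D,I\subseteq\Omega$, $\varphi(D,I)=(-1)^{|I\cap D|}\big(\prod_{i\in I-\max(I)}\tau_{(i)}\big)\big(\prod_{i\in\max(I)-D}\eta_{(i)}\big)$ if $I\cap D\subseteq\max(I)$, and $0$ otherwise; for $D\subseteq Y\subseteq\Omega$, $\pi(Y,D)=\sum_{I\in\mathcal{I}(Y)}\varphi(D,I)x^{|I|}\in K[x]$. $\mathrm{len}(y)$ is the largest cardinality of a chain in $\mathbf{P}$ with greatest element $y$; $\mathbf{P}$ is hierarchical if $\mathrm{len}(u)+1\leqslant\mathrm{len}(v)$ implies $u\preccurlyeq_{\mathbf{P}}v$. *)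

theory Defs
  imports "HOL-Computational_Algebra.Polynomial"
begin

definition finite_poset :: "'a set \<Rightarrow> ('a \<Rightarrow> 'a \<Rightarrow> bool) \<Rightarrow> bool" where
  "finite_poset \<Omega> le \<longleftrightarrow> finite \<Omega> \<and>
     (\<forall>x\<in>\<Omega>. le x x) \<and>
     (\<forall>x\<in>\<Omega>. \<forall>y\<in>\<Omega>. le x y \<and> le y x \<longrightarrow> x = y) \<and>
     (\<forall>x\<in>\<Omega>. \<forall>y\<in>\<Omega>. \<forall>z\<in>\<Omega>. le x y \<and> le y z \<longrightarrow> le x z)"

definition maxel :: "('a \<Rightarrow> 'a \<Rightarrow> bool) \<Rightarrow> 'a set \<Rightarrow> 'a set" where
  "maxel le Y = {y \<in> Y. \<forall>z\<in>Y. le y z \<longrightarrow> z = y}"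

definition down_sets :: "('a \<Rightarrow> 'a \<Rightarrow> bool) \<Rightarrow> 'a set \<Rightarrow> 'a set set" where
  "down_sets le Y = {I. I \<subseteq> Y \<and> (\<forall>i\<in>I. \<forall>j\<in>Y. le j i \<longrightarrow> j \<in> I)}"

(* I(dual P): ideals of the dual poset = up-closed subsets of Omega *)
definition dual_ideals :: "'a set \<Rightarrow> ('a \<Rightarrow> 'a \<Rightarrow> bool) \<Rightarrow> 'a set set" where
  "dual_ideals \<Omega> le = {I. I \<subseteq> \<Omega> \<and> (\<forall>i\<in>I. \<forall>j\<in>\<Omega>. le i j \<longrightarrow> j \<in> I)}"

definition phi :: "('a \<Rightarrow> 'a \<Rightarrow> bool) \<Rightarrow> ('a \<Rightarrow> 'k::field) \<Rightarrow> ('a \<Rightarrow> 'k)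
                   \<Rightarrow> 'a set \<Rightarrow> 'a set \<Rightarrow> 'k" where
  "phi le \<tau> \<eta> D I =
     (if I \<inter> D \<subseteq> maxel le I
      then (-1) ^ card (I \<inter> D) * (\<Prod>i\<in>I - maxel le I. \<tau> i) * (\<Prod>i\<in>maxel le I - D. \<eta> i)
      else 0)"

definition piP :: "('a \<Rightarrow> 'a \<Rightarrow> bool) \<Rightarrow> ('a \<Rightarrow> 'k::field) \<Rightarrow> ('a \<Rightarrow> 'k)
                   \<Rightarrow> 'a set \<Rightarrow> 'a set \<Rightarrow> 'k poly" where
  "piP le \<tau> \<eta> Y D = (\<Sum>I\<in>down_sets le Y. monom (phi le \<tau> \<eta> D I) (card I))"

definition is_chain :: "('a \<Rightarrow> 'a \<Rightarrow> bool) \<Rightarrow> 'a set \<Rightarrow> bool" where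
  "is_chain le c \<longleftrightarrow> (\<forall>x\<in>c. \<forall>y\<in>c. le x y \<or> le y x)"

definition len :: "'a set \<Rightarrow> ('a \<Rightarrow> 'a \<Rightarrow> bool) \<Rightarrow> 'a \<Rightarrow> nat" where
  "len \<Omega> le y = Max {card c | c. c \<subseteq> \<Omega> \<and> is_chain le c \<and> y \<in> c \<and> (\<forall>x\<in>c. le x y)}"

definition hierarchical :: "'a set \<Rightarrow> ('a \<Rightarrow> 'a \<Rightarrow> bool) \<Rightarrow> bool" where
  "hierarchical \<Omega> le \<longleftrightarrow> (\<forall>u\<in>\<Omega>. \<forall>v\<in>\<Omega>. len \<Omega> le u + 1 \<le> len \<Omega> le v \<longrightarrow> le u v)"

end

theory Submission
  imports Defs
begin

lemma prod_monom1: "finite S \<Longrightarrow> (\<Prod>x\<in>S. monom (w x) 1) = monom (\<Prod>x\<in>S. w x) (card S)"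
  by (induction S rule: finite_induct) (auto simp: mult_monom)

lemma prod_lin: assumes "finite A"
  shows "(\<Prod>i\<in>A. [:1, w i:]) = (\<Sum>S\<in>Pow A. monom (\<Prod>i\<in>S. w i) (card S))"
proof -
  have "(\<Prod>i\<in>A. [:1, w i:]) = (\<Prod>i\<in>A. monom (w i) 1 + 1)"
    by (intro prod.cong refl) (simp add: monom_altdef one_pCons)
  also have "\<dots> = (\<Sum>S\<in>Pow A. (\<Prod>x\<in>S. monom (w x) 1) * (\<Prod>x\<in>A-S. 1))"
    by (rule prod_add[OF assms])
  also have "\<dots> = (\<Sum>S\<in>Pow A. monom (\<Prod>i\<in>S. w i) (card S))"
  proof (intro sum.cong refl)
    fix S assume "S \<in> Pow A"
    then have "finite S" using finite_subset[OF _ assms] by auto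
    then show "(\<Prod>x\<in>S. monom (w x) 1) * (\<Prod>x\<in>A-S. 1) = monom (\<Prod>i\<in>S. w i) (card S)"
      by (simp only: prod_monom1 prod.neutral_const mult_1_right)
  qed
  finally show ?thesis .
qed

lemma L1: fixes w r :: "'k::field"
  shows "1 + r * w = 0 \<longleftrightarrow> (w \<noteq> 0 \<and> r = - 1 / w)"
proof
  assume h: "1 + r * w = 0"
  then have rw: "r * w = - 1" by (simp add: add_eq_0_iff)
  then have "w \<noteq> 0" by auto
  moreover have "r = - 1 / w"
  proof -
    have "r = (r * w) / w" using \<open>w \<noteq> 0\<close> by simp
    also have "\<dots> = - 1 / w" using rw by simp
    finally show ?thesis .
  qed
  ultimately show "w \<noteq> 0 \<and> r = - 1 / w" by simp
next
  assume "w \<noteq> 0 \<and> r = - 1 / w"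
  then show "1 + r * w = 0" by simp
qed

lemma order_lin: fixes w :: "'k::field"
  shows "order r [:1, w:] = (if w \<noteq> 0 \<and> r = - 1 / w then 1 else 0)"
proof -
  have nz: "[:1, w:] \<noteq> 0" by simp
  have le: "order r [:1, w:] \<le> 1"
    using order_degree[OF nz] by (cases "w = 0") auto
  have "order r [:1, w:] = 0 \<longleftrightarrow> poly [:1, w:] r \<noteq> 0" by (rule order_eq_0_iff[OF nz])
  moreover have "poly [:1, w:] r = 0 \<longleftrightarrow> (w \<noteq> 0 \<and> r = - 1 / w)"
    using L1[of r w] by simp
  ultimately show ?thesis using le by auto
qed

lemma order_prod_lin: fixes w :: "'a \<Rightarrow> 'k::field"
  assumes "finite A"
  shows "order r (\<Prod>i\<in>A. [:1, w i:]) = card {i\<in>A. w i \<noteq> 0 \<and> r = - 1 / w i}"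
  using assms
proof (induction A rule: finite_induct)
  case empty then show ?case by simp
next
  case (insert x F)
  have nz: "(\<Prod>i\<in>F. [:1, w i:]) \<noteq> 0" by (simp add: prod_zero_iff[OF insert(1)])
  have "order r (\<Prod>i\<in>insert x F. [:1, w i:]) = order r [:1, w x:] + order r (\<Prod>i\<in>F. [:1, w i:])"
  proof -
    have nz2: "[:1, w x:] * (\<Prod>i\<in>F. [:1, w i:]) \<noteq> 0"
      using nz by (simp only: mult_eq_0_iff pCons_eq_0_iff one_neq_zero simp_thms)
    show ?thesis by (subst prod.insert[OF insert(1,2)], rule order_mult[OF nz2])
  qed
  also have "\<dots> = card {i\<in>insert x F. w i \<noteq> 0 \<and> r = - 1 / w i}"
  proof -
    have e: "{i\<in>insert x F. w i \<noteq> 0 \<and> r = - 1 / w i} = (if w x \<noteq> 0 \<and> r = - 1 / w x then insert x {i\<in>F. w i \<noteq> 0 \<and> r = - 1 / w i} else {i\<in>F. w i \<noteq> 0 \<and> r = - 1 / w i})"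
      by auto
    show ?thesis unfolding e using insert by (auto simp: order_lin)
  qed
  finally show ?case .
qed

definition wt :: "('a \<Rightarrow> 'k::field) \<Rightarrow> 'a set \<Rightarrow> 'a \<Rightarrow> 'k" where
  "wt \<eta> X i = (if i \<in> X then -1 else \<eta> i)"

locale hp =
  fixes Om :: "'a set" and le :: "'a \<Rightarrow> 'a \<Rightarrow> bool" and lv :: "'a \<Rightarrow> nat" and Bd :: nat
  assumes fin: "finite Om"
    and leiff: "\<And>u v. u \<in> Om \<Longrightarrow> v \<in> Om \<Longrightarrow> le u v \<longleftrightarrow> (u = v \<or> lv u < lv v)"
    and bd: "\<And>i. i \<in> Om \<Longrightarrow> lv i \<le> Bd"
begin

definition lev :: "nat \<Rightarrow> 'a set" where "lev m = {i\<in>Om. lv i = m}"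
definition blw :: "nat \<Rightarrow> 'a set" where "blw m = {i\<in>Om. lv i < m}"
definition PP :: "('a \<Rightarrow> 'k::field) \<Rightarrow> 'a set \<Rightarrow> nat \<Rightarrow> 'k poly" where
  "PP \<eta> X m = (\<Prod>i\<in>lev m. [:1, wt \<eta> X i:])"
definition TT :: "('a \<Rightarrow> 'k::field) \<Rightarrow> nat \<Rightarrow> 'k" where
  "TT \<tau> m = (\<Prod>i\<in>blw m. \<tau> i)"
definition trm :: "('a \<Rightarrow> 'k::field) \<Rightarrow> ('a \<Rightarrow> 'k) \<Rightarrow> 'a set \<Rightarrow> nat \<Rightarrow> 'k poly" where
  "trm \<tau> \<eta> X m = (if \<forall>j\<in>X. m \<le> lv j then monom (TT \<tau> m) (card (blw m)) * (PP \<eta> X m - 1) else 0)"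

lemma fin_lev[simp]: "finite (lev m)" and fin_blw[simp]: "finite (blw m)"
  using fin by (auto simp: lev_def blw_def)

lemma lev_blw_disj: "lev m \<inter> blw m = {}" by (auto simp: lev_def blw_def)

lemma down_char:
  "down_sets le Om - {{}} = (\<lambda>(m, S). blw m \<union> S) ` (SIGMA m:{..Bd}. Pow (lev m) - {{}})"
proof (rule set_eqI, rule iffI)
  fix I assume I: "I \<in> down_sets le Om - {{}}"
  then have sub: "I \<subseteq> Om" and ne: "I \<noteq> {}" and dc: "\<And>i j. i \<in> I \<Longrightarrow> j \<in> Om \<Longrightarrow> le j i \<Longrightarrow> j \<in> I"
    by (auto simp: down_sets_def)
  have finI: "finite I" using sub fin finite_subset by auto
  define m where "m = Max (lv ` I)"
  have mI: "m \<in> lv ` I" unfolding m_def using finI ne by simp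
  have lem: "\<And>i. i \<in> I \<Longrightarrow> lv i \<le> m" unfolding m_def using finI by simp
  have "I = blw m \<union> (I \<inter> lev m)"
  proof (rule set_eqI, rule iffI)
    fix j assume "j \<in> I" then show "j \<in> blw m \<union> (I \<inter> lev m)"
      using lem[of j] sub by (auto simp: blw_def lev_def)
  next
    fix j assume j: "j \<in> blw m \<union> (I \<inter> lev m)"
    obtain i where i: "i \<in> I" "lv i = m" using mI by auto
    show "j \<in> I"
    proof (cases "j \<in> blw m")
      case True
      then have "le j i" using leiff[of j i] i sub by (auto simp: blw_def)
      then show ?thesis using dc[OF i(1)] True by (auto simp: blw_def)
    qed (use j in auto)
  qed
  moreover have "m \<le> Bd" using mI bd sub by auto
  moreover have "I \<inter> lev m \<noteq> {}" using mI sub by (auto simp: lev_def)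
  ultimately show "I \<in> (\<lambda>(m, S). blw m \<union> S) ` (SIGMA m:{..Bd}. Pow (lev m) - {{}})"
    by (intro image_eqI[where x="(m, I \<inter> lev m)"]) auto
next
  fix I assume "I \<in> (\<lambda>(m, S). blw m \<union> S) ` (SIGMA m:{..Bd}. Pow (lev m) - {{}})"
  then obtain m S where I: "I = blw m \<union> S" and S: "S \<subseteq> lev m" "S \<noteq> {}" by auto
  have "I \<subseteq> Om" using I S by (auto simp: blw_def lev_def)
  moreover have "j \<in> I" if "i \<in> I" "j \<in> Om" "le j i" for i j
  proof -
    have "lv i \<le> m" using that(1) I S by (auto simp: blw_def lev_def)
    moreover have "i \<in> Om" using that(1) I S by (auto simp: blw_def lev_def)
    ultimately have "j = i \<or> lv j < m" using leiff[of j i] that by auto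
    then show ?thesis using that I by (auto simp: blw_def)
  qed
  moreover have "I \<noteq> {}" using I S by auto
  ultimately show "I \<in> down_sets le Om - {{}}" by (auto simp: down_sets_def)
qed

lemma down_inj: "inj_on (\<lambda>(m, S). blw m \<union> S) (SIGMA m:{..Bd}. Pow (lev m) - {{}})"
proof (rule inj_onI)
  fix p q assume p: "p \<in> (SIGMA m:{..Bd}. Pow (lev m) - {{}})" and q: "q \<in> (SIGMA m:{..Bd}. Pow (lev m) - {{}})"
    and e: "(\<lambda>(m, S). blw m \<union> S) p = (\<lambda>(m, S). blw m \<union> S) q"
  obtain m S where pm: "p = (m, S)" by (cases p)
  obtain m' S' where qm: "q = (m', S')" by (cases q)
  have S: "S \<subseteq> lev m" "S \<noteq> {}" using p pm by auto
  have S': "S' \<subseteq> lev m'" "S' \<noteq> {}" using q qm by auto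
  have eq: "blw m \<union> S = blw m' \<union> S'" using e pm qm by simp
  have le1: "m \<le> m'" if h: "S \<subseteq> lev m" "S \<noteq> {}" "S' \<subseteq> lev m'" "blw m \<union> S = blw m' \<union> S'" for m m' S S'
  proof -
    obtain s where "s \<in> S" using h by auto
    then have "lv s = m" "s \<in> blw m' \<union> S'" using h by (auto simp: lev_def)
    then show ?thesis using h by (auto simp: blw_def lev_def)
  qed
  have "m = m'" using le1[OF S(1,2) S'(1) eq] le1[OF S'(1,2) S(1) eq[symmetric]] by simp
  moreover have "S = S'"
  proof -
    have "S = (blw m \<union> S) \<inter> lev m" using S lev_blw_disj by auto
    also have "\<dots> = (blw m' \<union> S') \<inter> lev m'" using eq \<open>m = m'\<close> by simp
    also have "\<dots> = S'" using S' lev_blw_disj by auto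
    finally show ?thesis .
  qed
  ultimately show "p = q" using pm qm by simp
qed

lemma maxel_eq: assumes "S \<subseteq> lev m" "S \<noteq> {}" shows "maxel le (blw m \<union> S) = S"
proof (rule set_eqI, rule iffI)
  fix y assume y: "y \<in> maxel le (blw m \<union> S)"
  obtain s where s: "s \<in> S" using assms by auto
  show "y \<in> S"
  proof (rule ccontr)
    assume "y \<notin> S"
    then have "y \<in> blw m" using y by (auto simp: maxel_def)
    then have "le y s" "s \<noteq> y" using s assms leiff[of y s] by (auto simp: blw_def lev_def)
    then show False using y s by (auto simp: maxel_def)
  qed
next
  fix y assume y: "y \<in> S"
  have "z = y" if "z \<in> blw m \<union> S" "le y z" for z
  proof -
    have "z \<in> Om" "lv z \<le> m" using that(1) assms by (auto simp: blw_def lev_def)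
    moreover have "y \<in> Om" "lv y = m" using y assms by (auto simp: lev_def)
    ultimately show ?thesis using leiff[of y z] that(2) by auto
  qed
  then show "y \<in> maxel le (blw m \<union> S)" using y by (auto simp: maxel_def)
qed

lemma phi_eq:
  fixes \<tau> \<eta> :: "'a \<Rightarrow> 'k::field"
  assumes X: "X \<subseteq> Om" and S: "S \<subseteq> lev m" "S \<noteq> {}"
  shows "phi le \<tau> \<eta> X (blw m \<union> S) =
     (if \<forall>j\<in>X. m \<le> lv j then TT \<tau> m * (\<Prod>i\<in>S. wt \<eta> X i) else 0)"
proof -
  have mx: "maxel le (blw m \<union> S) = S" by (rule maxel_eq[OF S])
  have dif: "blw m \<union> S - S = blw m" using S lev_blw_disj by auto
  have finS: "finite S" by (rule finite_subset[OF S(1)]) simp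
  show ?thesis
  proof (cases "\<forall>j\<in>X. m \<le> lv j")
    case True
    then have "blw m \<inter> X = {}" by (auto simp: blw_def)
    then have int: "(blw m \<union> S) \<inter> X = S \<inter> X" by auto
    have "(\<Prod>i\<in>S. wt \<eta> X i) = (\<Prod>i\<in>S \<inter> X. wt \<eta> X i) * (\<Prod>i\<in>S - X. wt \<eta> X i)"
      using prod.Int_Diff[OF finS] by blast
    also have "\<dots> = (-1) ^ card (S \<inter> X) * (\<Prod>i\<in>S - X. \<eta> i)"
      by (simp add: wt_def)
    finally have "(\<Prod>i\<in>S. wt \<eta> X i) = (-1) ^ card (S \<inter> X) * (\<Prod>i\<in>S - X. \<eta> i)" .
    then show ?thesis using True int mx dif by (simp add: phi_def TT_def)
  next
    case False
    then obtain j where "j \<in> X" "lv j < m" by auto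
    then have "j \<in> (blw m \<union> S) \<inter> X" "j \<notin> S" using X S by (auto simp: blw_def lev_def)
    then have "\<not> (blw m \<union> S) \<inter> X \<subseteq> maxel le (blw m \<union> S)" using mx by auto
    then have "phi le \<tau> \<eta> X (blw m \<union> S) = 0" by (simp add: phi_def)
    then show ?thesis by (simp only: if_not_P[OF False])
  qed
qed

lemma formula:
  fixes \<tau> \<eta> :: "'a \<Rightarrow> 'k::field"
  assumes X: "X \<subseteq> Om"
  shows "piP le \<tau> \<eta> Om X = 1 + (\<Sum>m\<le>Bd. trm \<tau> \<eta> X m)"
proof -
  let ?f = "\<lambda>I. monom (phi le \<tau> \<eta> X I) (card I)"
  let ?g = "\<lambda>(m, S). blw m \<union> S"
  let ?SS = "SIGMA m:{..Bd}. Pow (lev m) - {{}}"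
  have e0: "{} \<in> down_sets le Om" by (simp add: down_sets_def)
  have fd: "finite (down_sets le Om)"
    by (rule finite_subset[of _ "Pow Om"]) (auto simp: down_sets_def fin)
  have "piP le \<tau> \<eta> Om X = ?f {} + (\<Sum>I\<in>down_sets le Om - {{}}. ?f I)"
    unfolding piP_def using sum.remove[OF fd e0] by blast
  also have "?f {} = 1" by (simp add: phi_def maxel_def)
  also have "(\<Sum>I\<in>down_sets le Om - {{}}. ?f I) = (\<Sum>p\<in>?SS. ?f (?g p))"
    unfolding down_char by (rule sum.reindex[OF down_inj, unfolded comp_def])
  also have "\<dots> = (\<Sum>m\<le>Bd. \<Sum>S\<in>Pow (lev m) - {{}}. ?f (blw m \<union> S))"
    by (subst sum.Sigma) (auto intro!: sum.cong simp: split_def)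
  also have "\<dots> = (\<Sum>m\<le>Bd. trm \<tau> \<eta> X m)"
  proof (intro sum.cong refl)
    fix m
    have step: "?f (blw m \<union> S) = (if \<forall>j\<in>X. m \<le> lv j then monom (TT \<tau> m) (card (blw m)) * monom (\<Prod>i\<in>S. wt \<eta> X i) (card S) else 0)"
      if "S \<in> Pow (lev m) - {{}}" for S
    proof -
      have "card (blw m \<union> S) = card (blw m) + card S"
        using that lev_blw_disj by (subst card_Un_disjoint) (auto intro: finite_subset)
      then show ?thesis using phi_eq[OF X, of S m \<tau> \<eta>] that by (auto simp: mult_monom)
    qed
    have p: "(\<Sum>S\<in>Pow (lev m). monom (\<Prod>i\<in>S. wt \<eta> X i) (card S)) =
          1 + (\<Sum>S\<in>Pow (lev m) - {{}}. monom (\<Prod>i\<in>S. wt \<eta> X i) (card S))"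
      using sum.remove[of "Pow (lev m)" "{}" "\<lambda>S. monom (\<Prod>i\<in>S. wt \<eta> X i) (card S)"] by simp
    show "(\<Sum>S\<in>Pow (lev m) - {{}}. ?f (blw m \<union> S)) = trm \<tau> \<eta> X m"
    proof (cases "\<forall>j\<in>X. m \<le> lv j")
      case True
      have "(\<Sum>S\<in>Pow (lev m) - {{}}. ?f (blw m \<union> S)) =
         (\<Sum>S\<in>Pow (lev m) - {{}}. monom (TT \<tau> m) (card (blw m)) * monom (\<Prod>i\<in>S. wt \<eta> X i) (card S))"
        using step True by (intro sum.cong) auto
      also have "\<dots> = monom (TT \<tau> m) (card (blw m)) * (\<Sum>S\<in>Pow (lev m) - {{}}. monom (\<Prod>i\<in>S. wt \<eta> X i) (card S))"
        by (simp add: sum_distrib_left)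
      also have "\<dots> = trm \<tau> \<eta> X m"
        using True p prod_lin[of "lev m" "wt \<eta> X"] by (simp add: trm_def PP_def)
      finally show ?thesis .
    next
      case False
      have z: "?f (blw m \<union> S) = 0" if "S \<in> Pow (lev m) - {{}}" for S
        using step[OF that, unfolded if_not_P[OF False]] .
      show ?thesis unfolding trm_def if_not_P[OF False] using z by (simp add: sum.neutral)
    qed
  qed
  finally show ?thesis .
qed

end

lemma glue:
  assumes "finite A" "finite B" "\<And>v. card {i\<in>A. f i = v} = card {i\<in>B. g i = v}"
  shows "\<exists>e. bij_betw e A B \<and> (\<forall>i\<in>A. f i = g (e i))"
proof -
  define F where "F v = (SOME h. bij_betw h {i\<in>A. f i = v} {i\<in>B. g i = v})" for v
  have Fb: "bij_betw (F v) {i\<in>A. f i = v} {i\<in>B. g i = v}" for v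
  proof -
    have "\<exists>h. bij_betw h {i\<in>A. f i = v} {i\<in>B. g i = v}"
      by (rule finite_same_card_bij) (use assms in auto)
    then show ?thesis unfolding F_def by (rule someI_ex)
  qed
  define e where "e i = F (f i) i" for i
  have img: "e i \<in> B \<and> g (e i) = f i" if "i \<in> A" for i
    using bij_betwE[OF Fb[of "f i"]] that unfolding e_def by auto
  have "inj_on e A"
  proof (rule inj_onI)
    fix i j assume ij: "i \<in> A" "j \<in> A" "e i = e j"
    have "f i = g (e i)" "f j = g (e j)" using img ij(1,2) by auto
    then have "f i = f j" using ij(3) by simp
    then have "F (f i) i = F (f i) j" using ij unfolding e_def by simp
    then show "i = j" using bij_betw_imp_inj_on[OF Fb[of "f i"]] ij \<open>f i = f j\<close>
      by (auto dest: inj_onD)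
  qed
  moreover have "e ` A = B"
  proof (rule set_eqI, rule iffI)
    fix b assume "b \<in> e ` A" then show "b \<in> B" using img by auto
  next
    fix b assume b: "b \<in> B"
    then have "b \<in> F (g b) ` {i\<in>A. f i = g b}" using bij_betw_imp_surj_on[OF Fb[of "g b"]] by auto
    then obtain i where "i \<in> A" "f i = g b" "F (g b) i = b" by auto
    then have "e i = b" unfolding e_def by simp
    then show "b \<in> e ` A" using \<open>i \<in> A\<close> by blast
  qed
  ultimately have "bij_betw e A B" unfolding bij_betw_def by simp
  moreover have "\<forall>i\<in>A. f i = g (e i)" using img by simp
  ultimately show ?thesis by blast
qed

lemma bij_cnt:
  assumes "bij_betw e A B" "\<forall>i\<in>A. f i = g (e i)"
  shows "card {i\<in>A. f i = v} = card {i\<in>B. g i = v}"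
proof -
  have "bij_betw e {i\<in>A. f i = v} {i\<in>B. g i = v}"
  proof -
    have "inj_on e {i\<in>A. f i = v}" using assms(1) unfolding bij_betw_def by (auto intro: inj_on_subset)
    moreover have "e ` {i\<in>A. f i = v} = {i\<in>B. g i = v}"
    proof (rule set_eqI, rule iffI)
      fix b assume "b \<in> e ` {i\<in>A. f i = v}" then show "b \<in> {i\<in>B. g i = v}"
        using assms bij_betwE by fastforce
    next
      fix b assume b: "b \<in> {i\<in>B. g i = v}"
      then obtain a where "a \<in> A" "e a = b" using assms(1) unfolding bij_betw_def by auto
      then show "b \<in> e ` {i\<in>A. f i = v}" using b assms(2) by auto
    qed
    ultimately show ?thesis unfolding bij_betw_def by simp
  qed
  then show ?thesis by (rule bij_betw_same_card)
qed

lemma inv_eq_iff: fixes c w :: "'k::field" assumes "c \<noteq> 0" "w \<noteq> 0"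
  shows "(- 1 / c = - 1 / w) \<longleftrightarrow> c = w"
  using assms by (simp add: divide_inverse)

lemma degree_prod_lin: fixes f :: "'a \<Rightarrow> 'k::field" assumes "finite A"
  shows "degree (\<Prod>i\<in>A. [:1, f i:]) = card {i\<in>A. f i \<noteq> 0}"
  using assms
proof (induction A rule: finite_induct)
  case empty then show ?case by simp
next
  case (insert x F)
  have nz: "(\<Prod>i\<in>F. [:1, f i:]) \<noteq> 0" by (simp add: prod_zero_iff[OF insert(1)])
  have "degree (\<Prod>i\<in>insert x F. [:1, f i:]) = degree [:1, f x:] + degree (\<Prod>i\<in>F. [:1, f i:])"
    by (subst prod.insert[OF insert(1,2)], rule degree_mult_eq) (use nz in auto)
  also have "\<dots> = card {i\<in>insert x F. f i \<noteq> 0}"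
  proof -
    have e: "{i\<in>insert x F. f i \<noteq> 0} = (if f x \<noteq> 0 then insert x {i\<in>F. f i \<noteq> 0} else {i\<in>F. f i \<noteq> 0})"
      by auto
    show ?thesis unfolding e using insert by auto
  qed
  finally show ?case .
qed

lemma prod_lin_cnt: fixes f g :: "'a \<Rightarrow> 'k::field" assumes "finite A"
  and eq: "(\<Prod>i\<in>A. [:1, f i:]) = (\<Prod>i\<in>A. [:1, g i:])"
  shows "card {i\<in>A. f i = c} = card {i\<in>A. g i = c}"
proof (cases "c = 0")
  case False
  have e: "{i\<in>A. h i \<noteq> 0 \<and> - 1 / c = - 1 / h i} = {i\<in>A. h i = c}" for h :: "'a \<Rightarrow> 'k"
    using inv_eq_iff[OF False] False by auto
  show ?thesis using order_prod_lin[OF assms(1), of "-1/c" f] order_prod_lin[OF assms(1), of "-1/c" g]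
    eq e[of f] e[of g] by simp
next
  case True
  have d: "card {i\<in>A. f i \<noteq> 0} = card {i\<in>A. g i \<noteq> 0}"
    using degree_prod_lin[OF assms(1), of f] degree_prod_lin[OF assms(1), of g] eq by simp
  have "card {i\<in>A. h i = 0} = card A - card {i\<in>A. h i \<noteq> 0}" for h :: "'a \<Rightarrow> 'k"
  proof -
    have "{i\<in>A. h i = 0} = A - {i\<in>A. h i \<noteq> 0}" by auto
    then show ?thesis using assms(1) by (simp add: card_Diff_subset)
  qed
  then show ?thesis using True d by simp
qed

lemma sum_split3: "k \<le> (Bd::nat) \<Longrightarrow> (\<Sum>m\<le>Bd. f m) = (\<Sum>m<k. f m) + f k + (\<Sum>m\<in>{k<..Bd}. f m)"
proof -
  assume k: "k \<le> Bd"
  have "{..Bd} = {..<k} \<union> insert k {k<..Bd}" using k by auto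
  moreover have "{..<k} \<inter> insert k {k<..Bd} = {}" by auto
  ultimately have "(\<Sum>m\<le>Bd. f m) = (\<Sum>m<k. f m) + (\<Sum>m\<in>insert k {k<..Bd}. f m)"
    by (simp add: sum.union_disjoint ac_simps)
  also have "(\<Sum>m\<in>insert k {k<..Bd}. f m) = f k + (\<Sum>m\<in>{k<..Bd}. f m)" by simp
  finally show ?thesis by (simp add: add.assoc)
qed

lemma monom_x: "monom (1::'k::comm_ring_1) 1 = [:0, 1:]"
  by (simp add: monom_Suc monom_0)

context hp begin

definition up :: "'a set \<Rightarrow> bool" where
  "up X \<longleftrightarrow> X \<subseteq> Om \<and> (\<forall>i\<in>X. \<forall>j\<in>Om. lv i < lv j \<longrightarrow> j \<in> X)"

lemma PP_same: "(\<And>i. i \<in> lev m \<Longrightarrow> i \<in> X \<longleftrightarrow> i \<in> Y) \<Longrightarrow> PP \<eta> X m = PP \<eta> Y m"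
  unfolding PP_def by (intro prod.cong refl) (auto simp: wt_def)

lemma TT_nz: "\<forall>i\<in>Om. \<tau> i \<noteq> 0 \<Longrightarrow> TT \<tau> m \<noteq> 0"
  unfolding TT_def by (subst prod_zero_iff[OF fin_blw]) (auto simp: blw_def)

lemma low_eq:
  assumes "\<forall>j\<in>X. k \<le> lv j" "\<forall>j\<in>Y. k \<le> lv j" "m < k"
  shows "trm \<tau> \<eta> X m = trm \<tau> \<eta> Y m"
proof -
  have "PP \<eta> X m = PP \<eta> Y m"
    by (rule PP_same) (use assms in \<open>fastforce simp: lev_def\<close>)
  then show ?thesis using assms unfolding trm_def by auto
qed

lemma high_zero:
  assumes "c \<in> X" "lv c = k" "k < m" shows "trm \<tau> \<eta> X m = 0"
  using assms unfolding trm_def by force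

lemma degree_PP: "degree (PP \<eta> X m) \<le> card (lev m)"
proof -
  have "degree (PP \<eta> X m) = card {i\<in>lev m. wt \<eta> X i \<noteq> 0}"
    unfolding PP_def by (rule degree_prod_lin) simp
  also have "\<dots> \<le> card (lev m)" by (rule card_mono) auto
  finally show ?thesis .
qed

lemma high_dvd:
  fixes \<tau> \<eta> :: "'a \<Rightarrow> 'k::field"
  assumes "k < m"
  shows "monom 1 (card (blw k) + card (lev k) + 1) dvd trm \<tau> \<eta> Y m"
proof (cases "\<forall>j\<in>Y. m \<le> lv j")
  case True
  let ?N = "card (blw k) + card (lev k)"
  have "blw k \<union> lev k \<subseteq> blw m" using assms by (auto simp: blw_def lev_def)
  then have "card (blw k \<union> lev k) \<le> card (blw m)" by (rule card_mono[OF fin_blw])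
  moreover have "card (blw k \<union> lev k) = ?N"
    using lev_blw_disj by (subst card_Un_disjoint) auto
  ultimately have Nle: "?N \<le> card (blw m)" by simp
  have d1: "monom 1 ?N dvd monom (TT \<tau> m) (card (blw m))"
  proof
    show "monom (TT \<tau> m) (card (blw m)) = monom 1 ?N * monom (TT \<tau> m) (card (blw m) - ?N)"
      using Nle by (simp add: mult_monom)
  qed
  have "poly (PP \<eta> Y m - 1) 0 = 0" unfolding PP_def by (simp add: poly_prod)
  then have d2: "monom 1 1 dvd PP \<eta> Y m - 1" unfolding monom_x
    using dvd_iff_poly_eq_0[of 0 "PP \<eta> Y m - 1"] by simp
  have "monom 1 ?N * monom 1 1 dvd monom (TT \<tau> m) (card (blw m)) * (PP \<eta> Y m - 1)"
    by (rule mult_dvd_mono[OF d1 d2])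
  then show ?thesis using True by (simp add: trm_def mult_monom)
next
  case False then show ?thesis by (simp only: trm_def if_not_P[OF False] if_False dvd_0_right)
qed

lemma strict:
  fixes \<tau> \<eta> :: "'a \<Rightarrow> 'k::field"
  assumes X: "up X" and Y: "up Y" and c: "c \<in> X" "lv c = k"
    and kX: "\<forall>j\<in>X. k \<le> lv j" and kY: "\<forall>j\<in>Y. k < lv j"
    and eta: "\<forall>i\<in>Om. \<eta> i \<noteq> -1" and tau: "\<forall>i\<in>Om. \<tau> i \<noteq> 0"
  shows "piP le \<tau> \<eta> Om X \<noteq> piP le \<tau> \<eta> Om Y"
proof
  assume eq: "piP le \<tau> \<eta> Om X = piP le \<tau> \<eta> Om Y"
  have XO: "X \<subseteq> Om" and YO: "Y \<subseteq> Om" using X Y by (auto simp: up_def)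
  have cO: "c \<in> Om" using c XO by auto
  have kB: "k \<le> Bd" using bd[OF cO] c by simp
  have kY': "\<forall>j\<in>Y. k \<le> lv j" using kY by auto
  have sums: "(\<Sum>m\<le>Bd. trm \<tau> \<eta> X m) = (\<Sum>m\<le>Bd. trm \<tau> \<eta> Y m)"
    using eq formula[OF XO, of \<tau> \<eta>] formula[OF YO, of \<tau> \<eta>] by simp
  have lows: "(\<Sum>m<k. trm \<tau> \<eta> X m) = (\<Sum>m<k. trm \<tau> \<eta> Y m)"
    by (rule sum.cong[OF refl], rule low_eq[OF kX kY']) simp
  have highs: "(\<Sum>m\<in>{k<..Bd}. trm \<tau> \<eta> X m) = 0"
    by (rule sum.neutral) (use high_zero[OF c] in auto)
  let ?T = "TT \<tau> k" and ?N = "card (blw k)" and ?n = "card (lev k)"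
  define A where "A = PP \<eta> X k - PP \<eta> Y k"
  have tX: "trm \<tau> \<eta> X k = monom ?T ?N * (PP \<eta> X k - 1)" using kX by (simp add: trm_def)
  have tY: "trm \<tau> \<eta> Y k = monom ?T ?N * (PP \<eta> Y k - 1)" using kY' by (simp add: trm_def)
  have "trm \<tau> \<eta> X k = trm \<tau> \<eta> Y k + (\<Sum>m\<in>{k<..Bd}. trm \<tau> \<eta> Y m)"
    using sums sum_split3[OF kB, of "trm \<tau> \<eta> X"] sum_split3[OF kB, of "trm \<tau> \<eta> Y"] lows highs
    by (simp add: add.assoc)
  then have e1: "monom ?T ?N * A = (\<Sum>m\<in>{k<..Bd}. trm \<tau> \<eta> Y m)"
    unfolding A_def using tX tY by (simp add: algebra_simps)
  have "monom 1 (?N + ?n + 1) dvd (\<Sum>m\<in>{k<..Bd}. trm \<tau> \<eta> Y m)"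
    by (rule dvd_sum) (use high_dvd in auto)
  then obtain R where R: "monom ?T ?N * A = monom 1 (?N + ?n + 1) * R" using e1 by (auto elim: dvdE)
  have m1: "monom ?T ?N = smult ?T (monom 1 ?N)" by (simp add: smult_monom)
  have m2: "monom (1::'k) (?N + ?n + 1) = monom 1 ?N * monom 1 (?n + 1)" by (simp add: mult_monom)
  have "monom 1 ?N * (smult ?T A) = monom 1 ?N * (monom 1 (?n + 1) * R)"
    using R unfolding m1 m2 by (simp only: mult_smult_left mult_smult_right mult.assoc)
  moreover have nzN: "monom (1::'k) ?N \<noteq> 0" by simp
  ultimately have "smult ?T A = monom 1 (?n + 1) * R" using mult_left_cancel[OF nzN] by blast
  then have "monom 1 (?n + 1) dvd smult ?T A" by simp
  then have dv: "monom 1 (?n + 1) dvd A"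
    using TT_nz[OF tau, of k] by (simp add: dvd_smult_iff)
  have A0: "A = 0"
  proof (rule ccontr)
    assume "A \<noteq> 0"
    then have "degree (monom (1::'k) (?n + 1)) \<le> degree A" by (rule dvd_imp_degree_le[OF dv])
    moreover have "degree A \<le> ?n" unfolding A_def
      using degree_diff_le[OF degree_PP degree_PP] by blast
    ultimately show False by (simp add: degree_monom_eq)
  qed
  have "poly (PP \<eta> X k) 1 = 0"
  proof -
    have "c \<in> lev k" using c cO by (simp add: lev_def)
    then show ?thesis unfolding PP_def poly_prod using c by (subst prod_zero_iff[OF fin_lev]) (auto simp: wt_def intro!: bexI[of _ c])
  qed
  moreover have "poly (PP \<eta> Y k) 1 \<noteq> 0"
  proof -
    have "1 + \<eta> i \<noteq> 0" if "i \<in> Om" for i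
      using eta that by (simp add: add_eq_0_iff)
    moreover have "i \<notin> Y" if "i \<in> lev k" for i using that kY by (auto simp: lev_def)
    ultimately show ?thesis unfolding PP_def poly_prod
      by (subst prod_zero_iff[OF fin_lev]) (auto simp: wt_def lev_def)
  qed
  ultimately show False using A0 unfolding A_def by simp
qed

lemma eqlev:
  fixes \<tau> \<eta> :: "'a \<Rightarrow> 'k::field"
  assumes X: "up X" and Y: "up Y" and c: "c \<in> X" "lv c = k" and d: "d \<in> Y" "lv d = k"
    and kX: "\<forall>j\<in>X. k \<le> lv j" and kY: "\<forall>j\<in>Y. k \<le> lv j"
    and tau: "\<forall>i\<in>Om. \<tau> i \<noteq> 0"
  shows "piP le \<tau> \<eta> Om X = piP le \<tau> \<eta> Om Y \<longleftrightarrow> PP \<eta> X k = PP \<eta> Y k"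
proof -
  have XO: "X \<subseteq> Om" and YO: "Y \<subseteq> Om" using X Y by (auto simp: up_def)
  have cO: "c \<in> Om" using c XO by auto
  have kB: "k \<le> Bd" using bd[OF cO] c by simp
  have lows: "(\<Sum>m<k. trm \<tau> \<eta> X m) = (\<Sum>m<k. trm \<tau> \<eta> Y m)"
    by (rule sum.cong[OF refl], rule low_eq[OF kX kY]) simp
  have hX: "(\<Sum>m\<in>{k<..Bd}. trm \<tau> \<eta> X m) = 0"
    by (rule sum.neutral) (use high_zero[OF c] in auto)
  have hY: "(\<Sum>m\<in>{k<..Bd}. trm \<tau> \<eta> Y m) = 0"
    by (rule sum.neutral) (use high_zero[OF d] in auto)
  have "piP le \<tau> \<eta> Om X = piP le \<tau> \<eta> Om Y \<longleftrightarrow> trm \<tau> \<eta> X k = trm \<tau> \<eta> Y k"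
    using formula[OF XO, of \<tau> \<eta>] formula[OF YO, of \<tau> \<eta>] sum_split3[OF kB, of "trm \<tau> \<eta> X"]
      sum_split3[OF kB, of "trm \<tau> \<eta> Y"] lows hX hY by simp
  also have "\<dots> \<longleftrightarrow> PP \<eta> X k = PP \<eta> Y k"
  proof -
    have nz: "monom (TT \<tau> k) (card (blw k)) \<noteq> 0" using TT_nz[OF tau] by simp
    show ?thesis using kX kY nz by (simp add: trm_def)
  qed
  finally show ?thesis .
qed

end

lemma len_facts:
  assumes fp: "finite_poset Om le" and u: "u \<in> Om"
  shows "len Om le u \<in> {card c | c. c \<subseteq> Om \<and> is_chain le c \<and> u \<in> c \<and> (\<forall>x\<in>c. le x u)}"
    and "len Om le u \<le> card Om"
proof -
  let ?CS = "{card c | c. c \<subseteq> Om \<and> is_chain le c \<and> u \<in> c \<and> (\<forall>x\<in>c. le x u)}"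
  have fin: "finite Om" and refl: "\<And>x. x \<in> Om \<Longrightarrow> le x x" using fp by (auto simp: finite_poset_def)
  have sub: "?CS \<subseteq> {..card Om}" using fin by (auto intro: card_mono)
  then have finCS: "finite ?CS" by (rule finite_subset) simp
  have "is_chain le {u}" using refl[OF u] by (simp add: is_chain_def)
  then have "card {u} \<in> ?CS" using u refl[OF u] by blast
  then have ne: "?CS \<noteq> {}" by auto
  show "len Om le u \<in> ?CS" unfolding len_def using Max_in[OF finCS ne] .
  then show "len Om le u \<le> card Om" using sub by auto
qed

lemma len_strict:
  assumes fp: "finite_poset Om le" and u: "u \<in> Om" and v: "v \<in> Om" and uv: "le u v" "u \<noteq> v"
  shows "len Om le u < len Om le v"
proof -
  have fin: "finite Om" and refl: "\<And>x. x \<in> Om \<Longrightarrow> le x x"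
    and anti: "\<And>x y. x \<in> Om \<Longrightarrow> y \<in> Om \<Longrightarrow> le x y \<Longrightarrow> le y x \<Longrightarrow> x = y"
    and trans: "\<And>x y z. x \<in> Om \<Longrightarrow> y \<in> Om \<Longrightarrow> z \<in> Om \<Longrightarrow> le x y \<Longrightarrow> le y z \<Longrightarrow> le x z"
    using fp unfolding finite_poset_def by (meson, meson, meson, meson)
  obtain c where c: "len Om le u = card c" "c \<subseteq> Om" "is_chain le c" "u \<in> c" "\<forall>x\<in>c. le x u"
    using len_facts(1)[OF fp u] by blast
  have vc: "v \<notin> c" using c anti[OF u v uv(1)] uv(2) v by auto
  let ?CS = "{card c | c. c \<subseteq> Om \<and> is_chain le c \<and> v \<in> c \<and> (\<forall>x\<in>c. le x v)}"
  have sub: "?CS \<subseteq> {..card Om}" using fin by (auto intro: card_mono)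
  then have finCS: "finite ?CS" by (rule finite_subset) simp
  have allv: "\<forall>x\<in>insert v c. le x v" using c refl[OF v] trans[OF _ u v _ uv(1)] by auto
  have "is_chain le (insert v c)" using c(3) allv unfolding is_chain_def by blast
  moreover have "insert v c \<subseteq> Om" using c v by auto
  ultimately have "card (insert v c) \<in> ?CS" using allv by blast
  moreover have "card (insert v c) = Suc (len Om le u)"
    using c vc finite_subset[OF c(2) fin] by simp
  ultimately have "Suc (len Om le u) \<in> ?CS" by simp
  then have "Suc (len Om le u) \<le> Max ?CS" by (rule Max_ge[OF finCS])
  then show ?thesis unfolding len_def by simp
qed

context hp begin

definition H :: "nat \<Rightarrow> 'a set" where "H k = {i\<in>Om. k < lv i}"

lemma minlev: assumes "up X" "X \<noteq> {}"
  obtains c k where "c \<in> X" "lv c = k" "\<forall>j\<in>X. k \<le> lv j"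
proof -
  have fX: "finite X" using assms(1) fin finite_subset by (auto simp: up_def)
  define k where "k = Min (lv ` X)"
  have "k \<in> lv ` X" unfolding k_def using fX assms(2) by simp
  then obtain c where "c \<in> X" "lv c = k" by auto
  moreover have "\<forall>j\<in>X. k \<le> lv j" unfolding k_def using fX by simp
  ultimately show ?thesis using that by blast
qed

lemma decomp: assumes "up X" "c \<in> X" "lv c = k" "\<forall>j\<in>X. k \<le> lv j"
  shows "X = (X \<inter> lev k) \<union> H k" "(X \<inter> lev k) \<inter> H k = {}"
proof -
  have XO: "X \<subseteq> Om" using assms(1) by (simp add: up_def)
  have "H k \<subseteq> X" using assms(1-3) by (auto simp: up_def H_def)
  moreover have "X \<subseteq> (X \<inter> lev k) \<union> H k"
  proof
    fix j assume "j \<in> X"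
    then show "j \<in> (X \<inter> lev k) \<union> H k" using assms(4) XO by (force simp: lev_def H_def)
  qed
  ultimately show "X = (X \<inter> lev k) \<union> H k" by blast
  show "(X \<inter> lev k) \<inter> H k = {}" by (auto simp: lev_def H_def)
qed

lemma fin_H[simp]: "finite (H k)" using fin by (simp add: H_def)

lemma cnt_split: fixes \<eta> :: "'a \<Rightarrow> 'k"
  assumes "up X" "c \<in> X" "lv c = k" "\<forall>j\<in>X. k \<le> lv j"
  shows "card {i\<in>X. \<eta> i = v} = card {i\<in>X \<inter> lev k. \<eta> i = v} + card {i\<in>H k. \<eta> i = v}"
proof -
  have e: "{i\<in>X. \<eta> i = v} = {i\<in>X \<inter> lev k. \<eta> i = v} \<union> {i\<in>H k. \<eta> i = v}"
    using decomp(1)[OF assms] by blast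
  have d: "{i\<in>X \<inter> lev k. \<eta> i = v} \<inter> {i\<in>H k. \<eta> i = v} = {}"
    using decomp(2)[OF assms] by blast
  show ?thesis unfolding e by (rule card_Un_disjoint) (use d in auto)
qed

lemma card_split:
  assumes "up X" "c \<in> X" "lv c = k" "\<forall>j\<in>X. k \<le> lv j"
  shows "card X = card (X \<inter> lev k) + card (H k)"
  using decomp[OF assms] by (metis card_Un_disjoint fin_H finite_Int fin_lev)

lemma wt_cnt: fixes \<eta> :: "'a \<Rightarrow> 'k::field"
  assumes "v \<noteq> -1"
  shows "card {i\<in>lev k. wt \<eta> X i = v} + card {i\<in>X \<inter> lev k. \<eta> i = v} = card {i\<in>lev k. \<eta> i = v}"
proof -
  have e1: "{i\<in>lev k. wt \<eta> X i = v} = {i\<in>lev k. i \<notin> X \<and> \<eta> i = v}"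
    using assms by (auto simp: wt_def)
  have e2: "{i\<in>lev k. \<eta> i = v} = {i\<in>lev k. i \<notin> X \<and> \<eta> i = v} \<union> {i\<in>X \<inter> lev k. \<eta> i = v}" by auto
  show ?thesis unfolding e1 e2 by (rule card_Un_disjoint[symmetric]) auto
qed

lemma wt_m1: fixes \<eta> :: "'a \<Rightarrow> 'k::field"
  assumes "\<forall>i\<in>Om. \<eta> i \<noteq> -1"
  shows "card {i\<in>lev k. wt \<eta> X i = -1} = card (X \<inter> lev k)"
proof -
  have "{i\<in>lev k. wt \<eta> X i = -1} = X \<inter> lev k" using assms by (auto simp: wt_def lev_def)
  then show ?thesis by simp
qed

lemma eta_m1: fixes \<eta> :: "'a \<Rightarrow> 'k::field"
  assumes "\<forall>i\<in>Om. \<eta> i \<noteq> -1" "A \<subseteq> Om"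
  shows "{i\<in>A. \<eta> i = -1} = {}"
  using assms by auto

lemma main_hp:
  fixes \<tau> \<eta> :: "'a \<Rightarrow> 'k::field"
  assumes eta: "\<forall>i\<in>Om. \<eta> i \<noteq> -1" and tau: "\<forall>i\<in>Om. \<tau> i \<noteq> 0"
    and X: "up X" and Y: "up Y"
  shows "piP le \<tau> \<eta> Om X = piP le \<tau> \<eta> Om Y \<longleftrightarrow> (\<exists>e. bij_betw e X Y \<and> (\<forall>i\<in>X. \<eta> i = \<eta> (e i)))"
proof -
  have XO: "X \<subseteq> Om" and YO: "Y \<subseteq> Om" using X Y by (auto simp: up_def)
  have fX: "finite X" and fY: "finite Y" using XO YO fin finite_subset by auto
  show ?thesis
  proof
    assume eq: "piP le \<tau> \<eta> Om X = piP le \<tau> \<eta> Om Y"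
    show "\<exists>e. bij_betw e X Y \<and> (\<forall>i\<in>X. \<eta> i = \<eta> (e i))"
    proof (cases "X = {}")
      case True
      show ?thesis
      proof (cases "Y = {}")
        case False
        then obtain d k where d: "d \<in> Y" "lv d = k" "\<forall>j\<in>Y. k \<le> lv j" using minlev[OF Y] by blast
        have "piP le \<tau> \<eta> Om Y \<noteq> piP le \<tau> \<eta> Om X" by (rule strict[OF Y X d]) (use True eta tau in auto)
        then show ?thesis using eq by simp
      qed (use True in \<open>auto simp: bij_betw_def\<close>)
    next
      case XF: False
      then obtain c kX where c: "c \<in> X" "lv c = kX" "\<forall>j\<in>X. kX \<le> lv j" using minlev[OF X] by blast
      show ?thesis
      proof (cases "Y = {}")
        case True
        have "piP le \<tau> \<eta> Om X \<noteq> piP le \<tau> \<eta> Om Y" by (rule strict[OF X Y c]) (use True eta tau in auto)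
        then show ?thesis using eq by simp
      next
        case False
        then obtain d kY where d: "d \<in> Y" "lv d = kY" "\<forall>j\<in>Y. kY \<le> lv j" using minlev[OF Y] by blast
        have "\<not> kX < kY"
        proof
          assume "kX < kY"
          then have "piP le \<tau> \<eta> Om X \<noteq> piP le \<tau> \<eta> Om Y" by (intro strict[OF X Y c]) (use d eta tau in auto)
          then show False using eq by simp
        qed
        moreover have "\<not> kY < kX"
        proof
          assume "kY < kX"
          then have "piP le \<tau> \<eta> Om Y \<noteq> piP le \<tau> \<eta> Om X" by (intro strict[OF Y X d]) (use c eta tau in auto)
          then show False using eq by simp
        qed
        ultimately have kk: "kY = kX" by simp
        have PPe: "PP \<eta> X kX = PP \<eta> Y kX"
          using eqlev[OF X Y c(1,2) d(1,2)[unfolded kk] c(3) d(3)[unfolded kk] tau] eq by simp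
        have wc: "card {i\<in>lev kX. wt \<eta> X i = v} = card {i\<in>lev kX. wt \<eta> Y i = v}" for v
          by (rule prod_lin_cnt[OF fin_lev]) (use PPe in \<open>simp add: PP_def\<close>)
        have lc: "card {i\<in>X \<inter> lev kX. \<eta> i = v} = card {i\<in>Y \<inter> lev kX. \<eta> i = v}" for v
        proof (cases "v = -1")
          case True
          have e1: "{i\<in>X \<inter> lev kX. \<eta> i = v} = {}" and e2: "{i\<in>Y \<inter> lev kX. \<eta> i = v} = {}"
            using True eta XO YO by auto
          show ?thesis unfolding e1 e2 by (rule refl)
        next
          case False
          show ?thesis using wt_cnt[OF False, where \<eta>=\<eta> and k=kX and X=X] wt_cnt[OF False, where \<eta>=\<eta> and k=kX and X=Y] wc[of v] by simp
        qed
        have "card {i\<in>X. \<eta> i = v} = card {i\<in>Y. \<eta> i = v}" for v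
          using cnt_split[OF X c, of \<eta> v] cnt_split[OF Y d(1,2)[unfolded kk] d(3)[unfolded kk], of \<eta> v] lc[of v]
          by simp
        then show ?thesis by (rule glue[OF fX fY])
      qed
    qed
  next
    assume "\<exists>e. bij_betw e X Y \<and> (\<forall>i\<in>X. \<eta> i = \<eta> (e i))"
    then obtain e where e: "bij_betw e X Y" "\<forall>i\<in>X. \<eta> i = \<eta> (e i)" by blast
    have cnt: "card {i\<in>X. \<eta> i = v} = card {i\<in>Y. \<eta> i = v}" for v by (rule bij_cnt[OF e])
    have cXY: "card X = card Y" by (rule bij_betw_same_card[OF e(1)])
    show "piP le \<tau> \<eta> Om X = piP le \<tau> \<eta> Om Y"
    proof (cases "X = {}")
      case True
      then have "Y = {}" using cXY fY by simp
      then show ?thesis using True by simp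
    next
      case XF: False
      then have YF: "Y \<noteq> {}" using cXY fX fY by auto
      obtain c kX where c: "c \<in> X" "lv c = kX" "\<forall>j\<in>X. kX \<le> lv j" using minlev[OF X XF] by blast
      obtain d kY where d: "d \<in> Y" "lv d = kY" "\<forall>j\<in>Y. kY \<le> lv j" using minlev[OF Y YF] by blast
      have less: "card B < card A" if A: "up A" and B: "up B" and a: "a \<in> A" "lv a = ka" "\<forall>j\<in>A. ka \<le> lv j"
        and b: "\<forall>j\<in>B. kb \<le> lv j" and kab: "ka < kb" for A B a ka kb
      proof -
        have BO: "B \<subseteq> Om" using B by (simp add: up_def)
        have fA: "finite A" using A fin finite_subset by (auto simp: up_def)
        have "B \<subseteq> A - {a}"
        proof
          fix j assume j: "j \<in> B"
          then have "lv a < lv j" using b kab a by force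
          then show "j \<in> A - {a}" using A a j BO by (auto simp: up_def)
        qed
        then have "card B \<le> card (A - {a})" by (rule card_mono[OF finite_Diff[OF fA]])
        also have "\<dots> < card A" by (rule card_Diff1_less[OF fA a(1)])
        finally show ?thesis .
      qed
      have "\<not> kX < kY" using less[OF X Y c d(3)] cXY by auto
      moreover have "\<not> kY < kX" using less[OF Y X d c(3)] cXY by auto
      ultimately have kk: "kY = kX" by simp
      note d' = d(1,2)[unfolded kk] d(3)[unfolded kk]
      have lc: "card {i\<in>X \<inter> lev kX. \<eta> i = v} = card {i\<in>Y \<inter> lev kX. \<eta> i = v}" for v
        using cnt_split[OF X c, of \<eta> v] cnt_split[OF Y d', of \<eta> v] cnt[of v] by simp
      have wc: "card {i\<in>lev kX. wt \<eta> X i = v} = card {i\<in>lev kX. wt \<eta> Y i = v}" for v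
      proof (cases "v = -1")
        case True
        have "card (X \<inter> lev kX) = card (Y \<inter> lev kX)"
          using card_split[OF X c] card_split[OF Y d'] cXY by simp
        then show ?thesis using wt_m1[OF eta, of kX X] wt_m1[OF eta, of kX Y] True by simp
      next
        case False
        show ?thesis using wt_cnt[OF False, where \<eta>=\<eta> and k=kX and X=X] wt_cnt[OF False, where \<eta>=\<eta> and k=kX and X=Y] lc[of v] by simp
      qed
      obtain e' where e': "bij_betw e' (lev kX) (lev kX)" "\<forall>i\<in>lev kX. wt \<eta> X i = wt \<eta> Y (e' i)"
        using glue[OF fin_lev fin_lev wc] by blast
      have "PP \<eta> X kX = (\<Prod>i\<in>lev kX. [:1, wt \<eta> Y (e' i):])"
        unfolding PP_def using e'(2) by (intro prod.cong) auto
      also have "\<dots> = PP \<eta> Y kX"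
        unfolding PP_def by (rule prod.reindex_bij_betw[OF e'(1), of "\<lambda>i. [:1, wt \<eta> Y i:]"])
      finally have "PP \<eta> X kX = PP \<eta> Y kX" .
      then show ?thesis using eqlev[OF X Y c(1,2) d'(1,2) c(3) d'(3) tau] by simp
    qed
  qed
qed

end

theorem proposition3p4:
  fixes \<Omega> :: "'a set" and le :: "'a \<Rightarrow> 'a \<Rightarrow> bool"
    and \<tau> \<eta> :: "'a \<Rightarrow> 'k::field" and C D :: "'a set"
  assumes "finite_poset \<Omega> le"
    and "hierarchical \<Omega> le"
    and "\<forall>i\<in>\<Omega>. \<tau> i \<noteq> 0"
    and "\<forall>i\<in>\<Omega>. \<eta> i \<noteq> -1"
    and "D \<in> dual_ideals \<Omega> le" and "C \<in> dual_ideals \<Omega> le"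
  shows "piP le \<tau> \<eta> \<Omega> C = piP le \<tau> \<eta> \<Omega> D \<longleftrightarrow>
         (\<exists>\<epsilon>. bij_betw \<epsilon> C D \<and> (\<forall>i\<in>C. \<eta> i = \<eta> (\<epsilon> i)))"
proof -
  have fin: "finite \<Omega>" and refl: "\<And>x. x \<in> \<Omega> \<Longrightarrow> le x x" using assms(1) by (auto simp: finite_poset_def)
  interpret hp \<Omega> le "len \<Omega> le" "card \<Omega>"
  proof
    show "finite \<Omega>" by (rule fin)
  next
    fix u v assume u: "u \<in> \<Omega>" and v: "v \<in> \<Omega>"
    show "le u v \<longleftrightarrow> (u = v \<or> len \<Omega> le u < len \<Omega> le v)"
    proof
      assume "le u v" then show "u = v \<or> len \<Omega> le u < len \<Omega> le v"
        using len_strict[OF assms(1) u v] by blast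
    next
      assume "u = v \<or> len \<Omega> le u < len \<Omega> le v"
      then show "le u v"
      proof
        assume "u = v" then show ?thesis using refl u by simp
      next
        assume "len \<Omega> le u < len \<Omega> le v"
        then show ?thesis using assms(2) u v unfolding hierarchical_def by simp
      qed
    qed
  next
    fix i assume "i \<in> \<Omega>" then show "len \<Omega> le i \<le> card \<Omega>" by (rule len_facts(2)[OF assms(1)])
  qed
  have upI: "up X" if "X \<in> dual_ideals \<Omega> le" for X
  proof -
    have "X \<subseteq> \<Omega>" "\<And>i j. i \<in> X \<Longrightarrow> j \<in> \<Omega> \<Longrightarrow> le i j \<Longrightarrow> j \<in> X"
      using that by (auto simp: dual_ideals_def)
    then show ?thesis unfolding up_def using leiff by blast
  qed
  show ?thesis by (rule main_hp[OF assms(4) assms(3) upI[OF assms(6)] upI[OF assms(5)]])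
qed

end
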